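(* Let $\Phi$ be an Orlicz function and $p$ a lattice norm on $\mathbb{R}^2$ with $p((1,0))=p((0,1))=1$. If $x\in L^\Phi(\mu)$ satisfies $I_\Phi(\lambda x)=+\infty$ for every $\lambda>1$, then $$1\le \|x\|_{\Phi,p}\le 1+I_\Phi(x).$$
   Context: $(\Omega,\Sigma,\mu)$ is a $\sigma$-finite complete measure space, $L^0$ the space of (classes of a.e. equal) real measurable functions. An Orlicz function is a function $\Phi:\mathbb{R}\to[0,\infty)$ which is convex, even, vanishes at $0$ and is not identically zero. $I_\Phi(x)=\int_\Omega\Phi(x(t))\,d\mu\in[0,+\infty]$; $L^\Phi(\mu)=\{x\in L^0: I_\Phi(\lambda x)<\infty\text{ for some }\lambda>0\}$. A lattice norm on $\mathbb{R}^2$ is a norm $p$ with $p((u,v))\le p((u',v'))$ whenever $|u|\le|u'|,|v|\le|v'|$. For such $p$ with $p((1,0))=1$, $\|x\|_{\Phi,p}=\inf_{k>0}\frac1k p((1,I_\Phi(kx)))$ for $x\in L^\Phi(\mu)$, with the convention $p((1,+\infty))=+\infty$. *)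

theory Defs
  imports "HOL-Analysis.Analysis"
begin

definition orlicz_function :: "(real \<Rightarrow> real) \<Rightarrow> bool" where
  "orlicz_function \<Phi> \<longleftrightarrow> convex_on UNIV \<Phi> \<and> (\<forall>u. \<Phi> u \<ge> 0) \<and> (\<forall>u. \<Phi> (- u) = \<Phi> u)
     \<and> \<Phi> 0 = 0 \<and> (\<exists>u. \<Phi> u \<noteq> 0)"

definition orlicz_modular :: "'a measure \<Rightarrow> (real \<Rightarrow> real) \<Rightarrow> ('a \<Rightarrow> real) \<Rightarrow> ennreal" where
  "orlicz_modular M \<Phi> x = (\<integral>\<^sup>+ t. ennreal (\<Phi> (x t)) \<partial>M)"

definition orlicz_space :: "'a measure \<Rightarrow> (real \<Rightarrow> real) \<Rightarrow> ('a \<Rightarrow> real) set" where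
  "orlicz_space M \<Phi> = {x \<in> borel_measurable M. \<exists>c>0. orlicz_modular M \<Phi> (\<lambda>t. c * x t) < \<infinity>}"

definition is_norm2 :: "(real \<times> real \<Rightarrow> real) \<Rightarrow> bool" where
  "is_norm2 p \<longleftrightarrow> (\<forall>v. p v \<ge> 0) \<and> (\<forall>v. p v = 0 \<longleftrightarrow> v = (0, 0))
     \<and> (\<forall>a u v. p (a * u, a * v) = \<bar>a\<bar> * p (u, v))
     \<and> (\<forall>u v u' v'. p (u + u', v + v') \<le> p (u, v) + p (u', v'))"

definition lattice_norm2 :: "(real \<times> real \<Rightarrow> real) \<Rightarrow> bool" where
  "lattice_norm2 p \<longleftrightarrow> is_norm2 p \<and>
     (\<forall>u v u' v'. \<bar>u\<bar> \<le> \<bar>u'\<bar> \<longrightarrow> \<bar>v\<bar> \<le> \<bar>v'\<bar> \<longrightarrow> p (u, v) \<le> p (u', v'))"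

definition p_ext :: "(real \<times> real \<Rightarrow> real) \<Rightarrow> ennreal \<Rightarrow> ennreal" where
  "p_ext p s = (if s = \<infinity> then \<infinity> else ennreal (p (1, enn2real s)))"

definition orlicz_p_norm ::
  "'a measure \<Rightarrow> (real \<Rightarrow> real) \<Rightarrow> (real \<times> real \<Rightarrow> real) \<Rightarrow> ('a \<Rightarrow> real) \<Rightarrow> ennreal" where
  "orlicz_p_norm M \<Phi> p x =
     (INF k\<in>{0<..}. ennreal (1 / k) * p_ext p (orlicz_modular M \<Phi> (\<lambda>t. k * x t)))"

end

theory Submission
  imports Defs
begin

theorem lemma2:
  fixes M :: "'a measure" and \<Phi> :: "real \<Rightarrow> real" and p :: "real \<times> real \<Rightarrow> real"
    and x :: "'a \<Rightarrow> real"
  assumes "sigma_finite_measure M" and "complete_measure M"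
    and "orlicz_function \<Phi>"
    and "lattice_norm2 p" and "p (1, 0) = 1" and "p (0, 1) = 1"
    and "x \<in> orlicz_space M \<Phi>"
    and "\<forall>c>1. orlicz_modular M \<Phi> (\<lambda>t. c * x t) = \<infinity>"
  shows "1 \<le> orlicz_p_norm M \<Phi> p x \<and> orlicz_p_norm M \<Phi> p x \<le> 1 + orlicz_modular M \<Phi> x"
proof
  have mono: "\<And>u v u' v'. \<bar>u\<bar> \<le> \<bar>u'\<bar> \<Longrightarrow> \<bar>v\<bar> \<le> \<bar>v'\<bar> \<Longrightarrow> p (u, v) \<le> p (u', v')"
    using assms(4) unfolding lattice_norm2_def by blast
  have hom: "\<And>a u v. p (a * u, a * v) = \<bar>a\<bar> * p (u, v)"
   and tri: "\<And>u v u' v'. p (u + u', v + v') \<le> p (u, v) + p (u', v')"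
    using assms(4) unfolding lattice_norm2_def is_norm2_def by blast+
  show "1 \<le> orlicz_p_norm M \<Phi> p x"
    unfolding orlicz_p_norm_def
  proof (rule INF_greatest)
    fix k :: real assume "k \<in> {0<..}"
    hence k: "k > 0" by simp
    show "1 \<le> ennreal (1 / k) * p_ext p (orlicz_modular M \<Phi> (\<lambda>t. k * x t))"
    proof (cases "k > 1")
      case True
      then have "orlicz_modular M \<Phi> (\<lambda>t. k * x t) = \<infinity>" using assms(8) by blast
      then show ?thesis using k by (simp add: p_ext_def ennreal_mult_top)
    next
      case False
      hence k1: "k \<le> 1" by simp
      show ?thesis
      proof (cases "orlicz_modular M \<Phi> (\<lambda>t. k * x t) = \<infinity>")
        case True
        then show ?thesis using k by (simp add: p_ext_def ennreal_mult_top)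
      next
        case F: False
        define r where "r = enn2real (orlicz_modular M \<Phi> (\<lambda>t. k * x t))"
        have r0: "r \<ge> 0" unfolding r_def by simp
        have "p (1, 0) \<le> p (1, r)" by (rule mono) (use r0 in auto)
        hence pr: "1 \<le> p (1, r)" using assms(5) by simp
        have "1 \<le> p (1, r) / k" using pr k k1
          by (smt (verit, best) le_divide_eq_1_pos)
        hence "1 \<le> ennreal (p (1, r) / k)" by simp
        also have "\<dots> = ennreal (1/k) * ennreal (p (1, r))"
          using k pr by (simp add: ennreal_mult'[symmetric] divide_inverse mult.commute)
        finally show ?thesis using F by (simp add: p_ext_def r_def)
      qed
    qed
  qed
  show "orlicz_p_norm M \<Phi> p x \<le> 1 + orlicz_modular M \<Phi> x"
  proof (cases "orlicz_modular M \<Phi> x = \<infinity>")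
    case True then show ?thesis by simp
  next
    case F: False
    define r where "r = enn2real (orlicz_modular M \<Phi> x)"
    have r0: "r \<ge> 0" unfolding r_def by simp
    have eq: "orlicz_modular M \<Phi> x = ennreal r" using F unfolding r_def
      by (simp add: ennreal_enn2real_if)
    have "p (0, r) = r" using hom[of r 0 1] assms(6) r0 by simp
    hence le: "p (1, r) \<le> 1 + r" using tri[of 1 0 0 r] assms(5) by simp
    have "orlicz_p_norm M \<Phi> p x \<le> ennreal (1 / 1) * p_ext p (orlicz_modular M \<Phi> (\<lambda>t. 1 * x t))"
      unfolding orlicz_p_norm_def by (rule INF_lower) simp
    also have "\<dots> = ennreal (p (1, r))" using F by (simp add: p_ext_def r_def)
    also have "\<dots> \<le> ennreal (1 + r)" using le by (simp add: ennreal_leI)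
    also have "\<dots> = 1 + orlicz_modular M \<Phi> x" using eq r0 by (simp add: ennreal_plus)
    finally show ?thesis .
  qed
qed

end
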